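(* Let $T$ be a locally finite rooted tree with root $r$, all of whose edges are directed towards $r$, and let $B$ and $R$ be disjoint sets of leaves of $T$. Then there exists a strong blue blockage or there exists a red blockage (for $(T,B,R)$).
   Context: Edges of $T$ are ordered pairs $st$ pointing from $s$ to $t$, oriented towards the root $r$ (so every vertex other than $r$ has exactly one outgoing edge). A \emph{leaf} is a vertex with no incoming edges. Elements of $B$ are called blue, elements of $R$ red. For an edge set $X$, $V(X)$ denotes the set of vertices incident with an edge of $X$. For an edge set $X$ and vertex $v$, the \emph{accumulation} $A(v,X)$ is the number of edges of $X$ pointing to $v$ minus the number of edges of $X$ pointing away from $v$; for edge sets $X,Y$, $A(v,X,Y)=A(v,X)-A(v,Y)$. An edge set is \emph{rayless} if the subgraph it forms contains no ray. The \emph{blue flow} $b(X)$ to $X$ is the union of the edge sets of those (directed) paths starting at a blue leaf all of whose interior vertices are not incident with an edge of $X$; the \emph{red flow} $r(X)$ is defined in the same way with red leaves in place of blue leaves. A \emph{red blockage} is a rayless edge set $X$ such that $V(X)\cap B=\emptyset$ and $A(v,X,b(X))\ge 0$ for every $v\in (V(X)\cup\{r\})\setminus R$. A \emph{blue blockage} is a rayless edge set $X$ such that $V(X)\cap R=\emptyset$ and $A(v,X,r(X))\ge 0$ for every $v\in (V(X)\cup\{r\})\setminus B$; it is \emph{strong} if $A(r,X,r(X))\ge 1$. *)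

theory Defs
  imports Main
begin

text \<open>A rooted tree is given by its vertex set V, its root r and a parent map par:
  every vertex s other than r has exactly one outgoing edge (s, par s), pointing towards r.\<close>

definition rooted_tree :: "'a set \<Rightarrow> 'a \<Rightarrow> ('a \<Rightarrow> 'a) \<Rightarrow> bool" where
  "rooted_tree V r par \<longleftrightarrow> r \<in> V \<and> (\<forall>v\<in>V - {r}. par v \<in> V)
     \<and> (\<forall>v\<in>V. \<exists>n. (par ^^ n) v = r)"

definition tedges :: "'a set \<Rightarrow> 'a \<Rightarrow> ('a \<Rightarrow> 'a) \<Rightarrow> ('a \<times> 'a) set" where
  "tedges V r par = {(s, par s) | s. s \<in> V \<and> s \<noteq> r}"

definition locally_finite_tree :: "'a set \<Rightarrow> 'a \<Rightarrow> ('a \<Rightarrow> 'a) \<Rightarrow> bool" where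
  "locally_finite_tree V r par \<longleftrightarrow> (\<forall>v\<in>V. finite {s. (s, v) \<in> tedges V r par})"

definition leaves :: "'a set \<Rightarrow> 'a \<Rightarrow> ('a \<Rightarrow> 'a) \<Rightarrow> 'a set" where
  "leaves V r par = {v \<in> V. \<not> (\<exists>s. (s, v) \<in> tedges V r par)}"

definition verts :: "('a \<times> 'a) set \<Rightarrow> 'a set" where
  "verts X = fst ` X \<union> snd ` X"

definition accum :: "'a \<Rightarrow> ('a \<times> 'a) set \<Rightarrow> int" where
  "accum v X = int (card {e \<in> X. snd e = v}) - int (card {e \<in> X. fst e = v})"

definition accum2 :: "'a \<Rightarrow> ('a \<times> 'a) set \<Rightarrow> ('a \<times> 'a) set \<Rightarrow> int" where
  "accum2 v X Y = accum v X - accum v Y"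

definition rayless :: "('a \<times> 'a) set \<Rightarrow> bool" where
  "rayless X \<longleftrightarrow> \<not> (\<exists>f :: nat \<Rightarrow> 'a. inj f \<and>
      (\<forall>i. (f i, f (Suc i)) \<in> X \<or> (f (Suc i), f i) \<in> X))"

definition dpath :: "('a \<times> 'a) set \<Rightarrow> 'a list \<Rightarrow> bool" where
  "dpath E vs \<longleftrightarrow> vs \<noteq> [] \<and> distinct vs \<and> (\<forall>i. Suc i < length vs \<longrightarrow> (vs ! i, vs ! Suc i) \<in> E)"

definition path_edges :: "'a list \<Rightarrow> ('a \<times> 'a) set" where
  "path_edges vs = {(vs ! i, vs ! Suc i) | i. Suc i < length vs}"

definition flow :: "'a set \<Rightarrow> 'a \<Rightarrow> ('a \<Rightarrow> 'a) \<Rightarrow> 'a set \<Rightarrow> ('a \<times> 'a) set \<Rightarrow> ('a \<times> 'a) set" where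
  "flow V r par S X = \<Union> {path_edges vs | vs. dpath (tedges V r par) vs
      \<and> hd vs \<in> S \<and> hd vs \<in> leaves V r par
      \<and> (\<forall>i. 0 < i \<and> Suc i < length vs \<longrightarrow> vs ! i \<notin> verts X)}"

definition red_blockage :: "'a set \<Rightarrow> 'a \<Rightarrow> ('a \<Rightarrow> 'a) \<Rightarrow> 'a set \<Rightarrow> 'a set \<Rightarrow> ('a \<times> 'a) set \<Rightarrow> bool" where
  "red_blockage V r par B R X \<longleftrightarrow> X \<subseteq> tedges V r par \<and> rayless X \<and> verts X \<inter> B = {}
     \<and> (\<forall>v \<in> (verts X \<union> {r}) - R. accum2 v X (flow V r par B X) \<ge> 0)"

definition blue_blockage :: "'a set \<Rightarrow> 'a \<Rightarrow> ('a \<Rightarrow> 'a) \<Rightarrow> 'a set \<Rightarrow> 'a set \<Rightarrow> ('a \<times> 'a) set \<Rightarrow> bool" where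
  "blue_blockage V r par B R X \<longleftrightarrow> X \<subseteq> tedges V r par \<and> rayless X \<and> verts X \<inter> R = {}
     \<and> (\<forall>v \<in> (verts X \<union> {r}) - B. accum2 v X (flow V r par R X) \<ge> 0)"

definition strong_blue_blockage :: "'a set \<Rightarrow> 'a \<Rightarrow> ('a \<Rightarrow> 'a) \<Rightarrow> 'a set \<Rightarrow> 'a set \<Rightarrow> ('a \<times> 'a) set \<Rightarrow> bool" where
  "strong_blue_blockage V r par B R X \<longleftrightarrow> blue_blockage V r par B R X
     \<and> accum2 r X (flow V r par R X) \<ge> 1"

end

theory Submission
  imports Defs
begin

locale lft =
  fixes V :: "'a set" and r :: 'a and par :: "'a \<Rightarrow> 'a"
  assumes rt: "rooted_tree V r par" and lf: "locally_finite_tree V r par"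
begin

definition ch :: "'a \<Rightarrow> 'a set" where "ch v = {s. (s, v) \<in> tedges V r par}"

lemma tedges_iff: "(s, v) \<in> tedges V r par \<longleftrightarrow> s \<in> V \<and> s \<noteq> r \<and> v = par s"
  by (auto simp: tedges_def)

lemma ch_iff: "s \<in> ch v \<longleftrightarrow> s \<in> V \<and> s \<noteq> r \<and> v = par s"
  by (simp add: ch_def tedges_iff)

lemma ch_finite: "v \<in> V \<Longrightarrow> finite (ch v)"
  using lf by (simp add: locally_finite_tree_def ch_def)

lemma r_in: "r \<in> V" using rt by (simp add: rooted_tree_def)

lemma par_in: "s \<in> V \<Longrightarrow> s \<noteq> r \<Longrightarrow> par s \<in> V"
  using rt by (simp add: rooted_tree_def)

lemma reach_root: "v \<in> V \<Longrightarrow> \<exists>n. (par ^^ n) v = r"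
  using rt by (simp add: rooted_tree_def)

lemma leaf_ch: "v \<in> leaves V r par \<Longrightarrow> ch v = {}"
  by (auto simp: leaves_def ch_def)

lemma leaf_V: "v \<in> leaves V r par \<Longrightarrow> v \<in> V"
  by (auto simp: leaves_def)

lemma tedges_verts: "X \<subseteq> tedges V r par \<Longrightarrow> verts X \<subseteq> V"
proof
  fix v assume X: "X \<subseteq> tedges V r par" and "v \<in> verts X"
  then obtain e where e: "e \<in> X" "v = fst e \<or> v = snd e" by (auto simp: verts_def)
  then obtain s where "e = (s, par s)" "s \<in> V" "s \<noteq> r" using X by (auto simp: tedges_def)
  thus "v \<in> V" using e par_in by auto
qed

inductive reach :: "'a set \<Rightarrow> 'a set \<Rightarrow> 'a \<Rightarrow> bool" for S W where
  base: "d \<in> S \<Longrightarrow> reach S W d"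
| step: "reach S W e \<Longrightarrow> e \<in> V \<Longrightarrow> e \<noteq> r \<Longrightarrow> par e \<notin> W \<Longrightarrow> reach S W (par e)"

lemma flow_sub: "flow V r par S X \<subseteq> {e \<in> tedges V r par. reach S (verts X) (fst e)}"
proof
  fix e assume "e \<in> flow V r par S X"
  then obtain vs where dp: "dpath (tedges V r par) vs" and hd: "hd vs \<in> S"
    and int: "\<forall>i. 0 < i \<and> Suc i < length vs \<longrightarrow> vs!i \<notin> verts X" and e: "e \<in> path_edges vs"
    unfolding flow_def by blast
  then obtain i where i: "Suc i < length vs" "e = (vs!i, vs!Suc i)" by (auto simp: path_edges_def)
  have edge: "\<And>j. Suc j < length vs \<Longrightarrow> (vs!j, vs!Suc j) \<in> tedges V r par"
    using dp by (auto simp: dpath_def)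
  have "reach S (verts X) (vs!j)" if "j \<le> i" for j
    using that
  proof (induction j)
    case 0 thus ?case using hd dp by (auto simp: dpath_def hd_conv_nth intro: reach.base)
  next
    case (Suc j)
    have "(vs!j, vs!Suc j) \<in> tedges V r par" using edge Suc.prems i by auto
    hence eq: "vs!Suc j = par (vs!j)" "vs!j \<in> V" "vs!j \<noteq> r" by (auto simp: tedges_iff)
    have "vs ! Suc j \<notin> verts X" using int Suc.prems i(1) by auto
    thus ?case using Suc eq reach.step[of S "verts X" "vs!j"] by auto
  qed
  thus "e \<in> {e \<in> tedges V r par. reach S (verts X) (fst e)}" using edge i by auto
qed


fun stg :: "'a set \<Rightarrow> 'a set \<Rightarrow> nat \<Rightarrow> 'a set" where
  "stg S Q 0 = {}"
| "stg S Q (Suc n) = S \<union> {v \<in> V. card (ch v \<inter> Q) < card (ch v \<inter> stg S Q n)}"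

definition L :: "'a set \<Rightarrow> 'a set \<Rightarrow> 'a set" where "L S Q = (\<Union>n. stg S Q n)"

definition rk :: "'a set \<Rightarrow> 'a set \<Rightarrow> 'a \<Rightarrow> nat" where "rk S Q v = (LEAST n. v \<in> stg S Q n)"

lemma card_ch_mono: "v \<in> V \<Longrightarrow> A \<subseteq> A' \<Longrightarrow> card (ch v \<inter> A) \<le> card (ch v \<inter> A')"
  by (rule card_mono) (auto simp: ch_finite)

lemma stg_Suc: "stg S Q n \<subseteq> stg S Q (Suc n)"
proof (induction n)
  case 0 thus ?case by simp
next
  case (Suc n)
  show ?case
  proof
    fix v assume "v \<in> stg S Q (Suc n)"
    thus "v \<in> stg S Q (Suc (Suc n))"
      using card_ch_mono[OF _ Suc.IH, of v] by auto
  qed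
qed

lemma stg_mono: "m \<le> n \<Longrightarrow> stg S Q m \<subseteq> stg S Q n"
proof -
  have "\<And>n. stg S Q n \<le> stg S Q (Suc n)" by (rule stg_Suc)
  from lift_Suc_mono_le[of "stg S Q", OF this] show "m \<le> n \<Longrightarrow> stg S Q m \<subseteq> stg S Q n" by blast
qed

lemma stg_anti: "Q \<subseteq> Q' \<Longrightarrow> stg S Q' n \<subseteq> stg S Q n"
proof (induction n)
  case 0 thus ?case by simp
next
  case (Suc n)
  show ?case
  proof
    fix v assume v: "v \<in> stg S Q' (Suc n)"
    show "v \<in> stg S Q (Suc n)"
    proof (cases "v \<in> S")
      case False
      then have "v \<in> V" "card (ch v \<inter> Q') < card (ch v \<inter> stg S Q' n)" using v by auto
      moreover have "card (ch v \<inter> Q) \<le> card (ch v \<inter> Q')" using card_ch_mono[OF \<open>v\<in>V\<close> Suc.prems] .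
      moreover have "card (ch v \<inter> stg S Q' n) \<le> card (ch v \<inter> stg S Q n)"
        using card_ch_mono[OF \<open>v\<in>V\<close> Suc.IH[OF Suc.prems]] .
      ultimately show ?thesis by auto
    qed simp
  qed
qed

lemma L_anti: "Q \<subseteq> Q' \<Longrightarrow> L S Q' \<subseteq> L S Q"
proof
  fix x assume Q: "Q \<subseteq> Q'" and "x \<in> L S Q'"
  then obtain n where "x \<in> stg S Q' n" by (auto simp: L_def)
  with stg_anti[OF Q, of S n] have "x \<in> stg S Q n" by blast
  thus "x \<in> L S Q" unfolding L_def by blast
qed

lemma stg_sub: "S \<subseteq> V \<Longrightarrow> stg S Q n \<subseteq> V"
  by (cases n) auto

lemma L_sub: "S \<subseteq> V \<Longrightarrow> L S Q \<subseteq> V"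
proof
  fix x assume S: "S \<subseteq> V" and "x \<in> L S Q"
  then obtain n where "x \<in> stg S Q n" by (auto simp: L_def)
  with stg_sub[OF S, of Q n] show "x \<in> V" by blast
qed

lemma fin_stage: "finite A \<Longrightarrow> A \<subseteq> L S Q \<Longrightarrow> \<exists>m. A \<subseteq> stg S Q m"
proof (induction A rule: finite_induct)
  case empty thus ?case by auto
next
  case (insert x A)
  then obtain m where m: "A \<subseteq> stg S Q m" by auto
  obtain k where k: "x \<in> stg S Q k" using insert.prems by (auto simp: L_def)
  have "insert x A \<subseteq> stg S Q (max k m)"
  proof -
    have "stg S Q k \<subseteq> stg S Q (max k m)" "stg S Q m \<subseteq> stg S Q (max k m)"
      by (rule stg_mono, simp)+
    thus ?thesis using m k by blast
  qed
  thus ?case by blast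
qed

lemma L_fp: assumes "v \<in> V"
  shows "v \<in> L S Q \<longleftrightarrow> v \<in> S \<or> card (ch v \<inter> Q) < card (ch v \<inter> L S Q)"
proof
  assume "v \<in> L S Q"
  then obtain n where n: "v \<in> stg S Q n" by (auto simp: L_def)
  then obtain m where m: "n = Suc m" by (cases n) auto
  have "stg S Q m \<subseteq> L S Q" by (auto simp: L_def)
  from card_ch_mono[OF assms this] n m
  show "v \<in> S \<or> card (ch v \<inter> Q) < card (ch v \<inter> L S Q)" by auto
next
  assume h: "v \<in> S \<or> card (ch v \<inter> Q) < card (ch v \<inter> L S Q)"
  show "v \<in> L S Q"
  proof (cases "v \<in> S")
    case True
    hence "v \<in> stg S Q (Suc 0)" by simp
    thus ?thesis unfolding L_def by blast
  next
    case False
    obtain m where m: "ch v \<inter> L S Q \<subseteq> stg S Q m"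
      using fin_stage[of "ch v \<inter> L S Q" S Q] ch_finite[OF assms] by blast
    have "stg S Q m \<subseteq> L S Q" by (auto simp: L_def)
    with m have "ch v \<inter> L S Q = ch v \<inter> stg S Q m" by auto
    with h False assms have "v \<in> stg S Q (Suc m)" by auto
    thus ?thesis unfolding L_def by blast
  qed
qed

lemma rk_prop: assumes "v \<in> L S Q" "v \<notin> S" "S \<subseteq> V"
  shows "card (ch v \<inter> Q) < card {c \<in> ch v. c \<in> L S Q \<and> rk S Q c < rk S Q v}"
proof -
  have ex: "\<exists>n. v \<in> stg S Q n" using assms(1) by (auto simp: L_def)
  have vk: "v \<in> stg S Q (rk S Q v)" unfolding rk_def by (rule LeastI_ex[OF ex])
  then obtain m where m: "rk S Q v = Suc m" by (cases "rk S Q v") auto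
  with vk assms have vV: "v \<in> V" and lt: "card (ch v \<inter> Q) < card (ch v \<inter> stg S Q m)" by auto
  have "ch v \<inter> stg S Q m \<subseteq> {c \<in> ch v. c \<in> L S Q \<and> rk S Q c < rk S Q v}"
  proof
    fix c assume c: "c \<in> ch v \<inter> stg S Q m"
    have "rk S Q c \<le> m" unfolding rk_def using c by (auto intro: Least_le)
    moreover have "c \<in> L S Q" using c unfolding L_def by blast
    ultimately show "c \<in> {c \<in> ch v. c \<in> L S Q \<and> rk S Q c < rk S Q v}" using c m by simp
  qed
  hence "card (ch v \<inter> stg S Q m) \<le> card {c \<in> ch v. c \<in> L S Q \<and> rk S Q c < rk S Q v}"
    by (intro card_mono) (auto simp: ch_finite vV)
  with lt show ?thesis by linarith
qed


lemma nat_desc_False: assumes "\<And>i. (g (Suc i) :: nat) < g i" shows False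
proof -
  have "g i + i \<le> g 0" for i
  proof (induction i)
    case (Suc i) thus ?case using assms[of i] by simp
  qed simp
  from this[of "Suc (g 0)"] show False by simp
qed

lemma gen_rayless:
  fixes rkf :: "'a \<Rightarrow> nat"
  assumes Xd: "X = {e \<in> tedges V r par. fst e \<in> P \<and> snd e \<notin> N \<and> (snd e \<in> P \<longrightarrow> rkf (fst e) < rkf (snd e))}"
  shows "rayless X"
  unfolding rayless_def
proof
  assume "\<exists>f :: nat \<Rightarrow> 'a. inj f \<and> (\<forall>i. (f i, f (Suc i)) \<in> X \<or> (f (Suc i), f i) \<in> X)"
  then obtain f :: "nat \<Rightarrow> 'a" where inj: "inj f" and st: "\<And>i. (f i, f (Suc i)) \<in> X \<or> (f (Suc i), f i) \<in> X"
    by blast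
  define dn where "dn i \<longleftrightarrow> (f (Suc i), f i) \<in> X" for i
  have up: "f (Suc i) = par (f i) \<and> f i \<in> V \<and> f i \<noteq> r" if "\<not> dn i" for i
    using st[of i] that by (auto simp: dn_def Xd tedges_iff)
  have dnE: "f i = par (f (Suc i)) \<and> f (Suc i) \<in> P \<and> (f i \<in> P \<longrightarrow> rkf (f (Suc i)) < rkf (f i))"
    if "dn i" for i
    using that by (auto simp: dn_def Xd tedges_iff)
  have "\<exists>k. dn k"
  proof (rule ccontr)
    assume "\<not> (\<exists>k. dn k)"
    hence up': "\<And>i. f (Suc i) = par (f i) \<and> f i \<in> V \<and> f i \<noteq> r" using up by blast
    have fn: "f n = (par ^^ n) (f 0)" for n
      by (induction n) (use up' in auto)
    obtain n where "(par ^^ n) (f 0) = r" using reach_root up'[of 0] by blast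
    with fn[of n] up'[of n] show False by simp
  qed
  then obtain k where k: "dn k" by blast
  have all: "dn j" if "k \<le> j" for j
    using that
  proof (induction j rule: dec_induct)
    case base thus ?case by (rule k)
  next
    case (step j)
    show ?case
    proof (rule ccontr)
      assume "\<not> dn (Suc j)"
      from up[OF this] dnE[OF step.IH] have "f (Suc (Suc j)) = f j" by simp
      with inj have "Suc (Suc j) = j" by (rule injD)
      thus False by simp
    qed
  qed
  define g where "g i = rkf (f (Suc (k + i)))" for i
  have "g (Suc i) < g i" for i
  proof -
    have a: "dn (Suc (k + i))" "dn (k + i)" using all by auto
    from dnE[OF a(2)] have "f (Suc (k + i)) \<in> P" by simp
    with dnE[OF a(1)] show ?thesis unfolding g_def add_Suc_right by auto
  qed
  thus False by (rule nat_desc_False)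
qed

lemma gen:
  fixes rkf :: "'a \<Rightarrow> nat"
  assumes S1l: "Sown \<subseteq> leaves V r par" and S2N: "Sopp \<subseteq> N" and disj: "P \<inter> N = {}"
    and rkb: "\<And>v. v \<in> P \<Longrightarrow> v \<notin> Sown \<Longrightarrow> card (ch v \<inter> N) < card {c \<in> ch v. c \<in> P \<and> rkf c < rkf v}"
    and tie: "\<And>v. v \<in> V \<Longrightarrow> v \<notin> P \<Longrightarrow> v \<notin> N \<Longrightarrow> card (ch v \<inter> P) = card (ch v \<inter> N)"
    and rN: "r \<notin> N"
    and Xd: "X = {e \<in> tedges V r par. fst e \<in> P \<and> snd e \<notin> N \<and> (snd e \<in> P \<longrightarrow> rkf (fst e) < rkf (snd e))}"
  shows "X \<subseteq> tedges V r par" "rayless X" "verts X \<inter> N = {}"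
    "\<And>v. v \<in> verts X \<union> {r} \<Longrightarrow> v \<notin> Sown \<Longrightarrow>
       accum2 v X (flow V r par Sopp X) \<ge> (if v = r \<and> r \<in> P then 1 else 0)"
proof -
  show XT: "X \<subseteq> tedges V r par" using Xd by auto
  show "rayless X" using gen_rayless[OF Xd] .
  show vN: "verts X \<inter> N = {}" using Xd disj by (auto simp: verts_def tedges_iff)
  have inX: "v \<in> snd ` X" if "c \<in> ch v" "c \<in> P" "v \<notin> N" "v \<in> P \<longrightarrow> rkf c < rkf v" for c v
  proof -
    have "(c, v) \<in> X" using that by (auto simp: Xd ch_def)
    thus ?thesis by force
  qed
  have reachN: "d \<in> N" if "reach Sopp (verts X) d" "d \<in> V" "d \<noteq> r" "par d \<notin> N" for d
    using that
  proof (induction rule: reach.induct)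
    case (base d) thus ?case using S2N by auto
  next
    case (step e)
    let ?d = "par e"
    show ?case
    proof (rule ccontr)
      assume dN: "?d \<notin> N"
      with step have eN: "e \<in> N" by auto
      have ec: "e \<in> ch ?d" using step by (simp add: ch_iff)
      have dV: "?d \<in> V" using step par_in by auto
      have fin: "finite (ch ?d)" using ch_finite[OF dV] .
      have pos: "0 < card (ch ?d \<inter> N)" using fin ec eN by (auto simp: card_gt_0_iff)
      have "?d \<in> snd ` X"
      proof (cases "?d \<in> P")
        case True
        have "?d \<notin> Sown" using S1l ec leaf_ch by blast
        with rkb[OF True] pos have "0 < card {c \<in> ch ?d. c \<in> P \<and> rkf c < rkf ?d}" by linarith
        then obtain c where "c \<in> ch ?d" "c \<in> P" "rkf c < rkf ?d" by (auto simp: card_gt_0_iff)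
        thus ?thesis using inX dN by blast
      next
        case False
        with tie[OF dV False dN] pos have "0 < card (ch ?d \<inter> P)" by simp
        then obtain c where "c \<in> ch ?d" "c \<in> P" by (auto simp: card_gt_0_iff)
        thus ?thesis using inX dN False by blast
      qed
      hence "?d \<in> verts X" by (simp add: verts_def)
      with step show False by simp
    qed
  qed
  fix v assume v: "v \<in> verts X \<union> {r}" "v \<notin> Sown"
  have vV: "v \<in> V" using v tedges_verts[OF XT] r_in by auto
  have vnN: "v \<notin> N" using v vN rN by auto
  have fin: "finite (ch v)" using ch_finite[OF vV] .
  define A where "A = {c \<in> ch v. c \<in> P \<and> (v \<in> P \<longrightarrow> rkf c < rkf v)}"
  have e1: "{e \<in> X. snd e = v} = (\<lambda>c. (c, v)) ` A"
    using vnN by (auto simp: Xd A_def ch_def tedges_iff)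
  have c1: "card {e \<in> X. snd e = v} = card A"
    unfolding e1 by (rule card_image) (auto simp: inj_on_def)
  have e2: "{e \<in> X. fst e = v} \<subseteq> (if v \<in> P \<and> v \<noteq> r then {(v, par v)} else {})"
    by (auto simp: Xd tedges_iff)
  have c2: "card {e \<in> X. fst e = v} \<le> (if v \<in> P \<and> v \<noteq> r then 1 else 0)"
    using card_mono[OF _ e2] by (auto split: if_splits)
  have e3: "{e \<in> flow V r par Sopp X. snd e = v} \<subseteq> (\<lambda>c. (c, v)) ` (ch v \<inter> N)"
  proof
    fix e assume "e \<in> {e \<in> flow V r par Sopp X. snd e = v}"
    with flow_sub obtain d where d: "e = (d, par d)" "d \<in> V" "d \<noteq> r" "reach Sopp (verts X) d" "par d = v"
      by (fastforce simp: tedges_def)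
    hence "d \<in> N" using reachN vnN by blast
    thus "e \<in> (\<lambda>c. (c, v)) ` (ch v \<inter> N)" using d by (auto simp: ch_iff)
  qed
  have "card {e \<in> flow V r par Sopp X. snd e = v} \<le> card ((\<lambda>c. (c, v)) ` (ch v \<inter> N))"
    using e3 fin by (intro card_mono) auto
  also have "\<dots> \<le> card (ch v \<inter> N)" by (rule card_image_le) (use fin in auto)
  finally have c3: "card {e \<in> flow V r par Sopp X. snd e = v} \<le> card (ch v \<inter> N)" .
  have acc: "accum2 v X (flow V r par Sopp X) \<ge> int (card A) - int (card {e \<in> X. fst e = v}) - int (card (ch v \<inter> N))"
    using c1 c3 unfolding accum2_def accum_def by linarith
  show "accum2 v X (flow V r par Sopp X) \<ge> (if v = r \<and> r \<in> P then 1 else 0)"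
  proof (cases "v \<in> P")
    case True
    hence "A = {c \<in> ch v. c \<in> P \<and> rkf c < rkf v}" by (simp add: A_def)
    with rkb[OF True v(2)] have "card (ch v \<inter> N) < card A" by simp
    with acc c2 True show ?thesis by (auto split: if_splits)
  next
    case False
    hence "A = ch v \<inter> P" by (auto simp: A_def)
    with tie[OF vV False vnN] have "card A = card (ch v \<inter> N)" by simp
    with acc c2 False show ?thesis by (auto split: if_splits)
  qed
qed

end

theorem theorem1p1:
  fixes V :: "'a set" and r :: 'a and par :: "'a \<Rightarrow> 'a" and B R :: "'a set"
  assumes "rooted_tree V r par"
    and "locally_finite_tree V r par"
    and "B \<subseteq> leaves V r par" and "R \<subseteq> leaves V r par"
    and "B \<inter> R = {}"
  shows "(\<exists>X. strong_blue_blockage V r par B R X) \<or> (\<exists>X. red_blockage V r par B R X)"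
proof -
  interpret lft V r par using assms(1,2) by unfold_locales
  have BV: "B \<subseteq> V" and RV: "R \<subseteq> V" using assms(3,4) leaf_V by auto
  show ?thesis
  proof (cases "r \<in> leaves V r par")
    case True
    have "red_blockage V r par B R {}"
      unfolding red_blockage_def
    proof (intro conjI ballI)
      show "rayless {}" by (simp add: rayless_def)
      fix v assume "v \<in> verts {} \<union> {r} - R"
      hence v: "v = r" by (simp add: verts_def)
      have "{e \<in> flow V r par B {}. snd e = r} = {}"
        using flow_sub[of B "{}"] leaf_ch[OF True] by (auto simp: ch_def)
      hence c: "card {e \<in> flow V r par B {}. snd e = r} = 0" by (simp only: card.empty)
      have c0: "card {e \<in> ({}::('a\<times>'a) set). snd e = r} = 0" "card {e \<in> ({}::('a\<times>'a) set). fst e = r} = 0" by simp_all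
      show "0 \<le> accum2 v {} (flow V r par B {})"
        unfolding accum2_def accum_def v using c c0 by linarith
    qed (auto simp: verts_def)
    thus ?thesis by blast
  next
    case False
    have rB: "r \<notin> B" and rR: "r \<notin> R" using False assms(3,4) by auto
    define F where "F Q = L R (L B Q)" for Q
    have "mono F" unfolding mono_def F_def by (intro allI impI L_anti) simp
    define N where "N = lfp F"
    define P where "P = L B N"
    have "N = F N" unfolding N_def by (rule lfp_unfold[OF \<open>mono F\<close>])
    hence NP: "N = L R P" unfolding P_def by (simp only: F_def)
    have PV: "P \<subseteq> V" unfolding P_def using L_sub BV by blast
    have NV: "N \<subseteq> V" using L_sub RV NP by blast
    have Pfp: "v \<in> P \<longleftrightarrow> v \<in> B \<or> card (ch v \<inter> N) < card (ch v \<inter> P)" if "v \<in> V" for v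
      using L_fp[OF that, of B N] by (simp add: P_def)
    have Nfp: "v \<in> N \<longleftrightarrow> v \<in> R \<or> card (ch v \<inter> P) < card (ch v \<inter> N)" if "v \<in> V" for v
      using L_fp[OF that, of R P] NP by simp
    have disj: "P \<inter> N = {}"
    proof (rule ccontr)
      assume "P \<inter> N \<noteq> {}"
      then obtain v where v: "v \<in> P" "v \<in> N" by blast
      hence vV: "v \<in> V" using PV by auto
      have a: "v \<in> B \<or> card (ch v \<inter> N) < card (ch v \<inter> P)" using v(1) Pfp[OF vV] by blast
      have b: "v \<in> R \<or> card (ch v \<inter> P) < card (ch v \<inter> N)" using v(2) Nfp[OF vV] by blast
      show False
      proof (cases "v \<in> B \<or> v \<in> R")
        case True
        hence "ch v = {}" using assms(3,4) leaf_ch by blast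
        thus False using a b assms(5) True by auto
      next
        case False
        thus False using a b by linarith
      qed
    qed
    have tie: "card (ch v \<inter> P) = card (ch v \<inter> N)" if "v \<in> V" "v \<notin> P" "v \<notin> N" for v
    proof -
      have "\<not> card (ch v \<inter> N) < card (ch v \<inter> P)" using that Pfp[OF that(1)] by blast
      moreover have "\<not> card (ch v \<inter> P) < card (ch v \<inter> N)" using that Nfp[OF that(1)] by blast
      ultimately show ?thesis by linarith
    qed
    have BP: "B \<subseteq> P" using Pfp BV by blast
    have RN: "R \<subseteq> N" using Nfp RV by blast
    show ?thesis
    proof (cases "r \<in> P")
      case True
      have rN: "r \<notin> N" using True disj by auto
      define X where "X = {e \<in> tedges V r par. fst e \<in> P \<and> snd e \<notin> N \<and> (snd e \<in> P \<longrightarrow> rk B N (fst e) < rk B N (snd e))}"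
      have rkb: "card (ch v \<inter> N) < card {c \<in> ch v. c \<in> P \<and> rk B N c < rk B N v}"
        if "v \<in> P" "v \<notin> B" for v
        using rk_prop[of v B N] that BV by (simp add: P_def)
      note G = gen[where Sown=B and Sopp=R and P=P and N=N and rkf="rk B N" and X=X,
                   OF assms(3) RN disj rkb tie rN X_def]
      have "strong_blue_blockage V r par B R X"
        unfolding strong_blue_blockage_def blue_blockage_def
      proof (intro conjI ballI)
        show "X \<subseteq> tedges V r par" by (rule G(1)) show "rayless X" by (rule G(2))
        show "verts X \<inter> R = {}" using G(3) RN by blast
        fix v assume "v \<in> verts X \<union> {r} - B"
        thus "0 \<le> accum2 v X (flow V r par R X)" using G(4)[of v] by (auto split: if_splits)
      next
        show "1 \<le> accum2 r X (flow V r par R X)" using G(4)[of r] True rB by simp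
      qed
      thus ?thesis by blast
    next
      case False
      have rN: "r \<notin> P" using False .
      define X where "X = {e \<in> tedges V r par. fst e \<in> N \<and> snd e \<notin> P \<and> (snd e \<in> N \<longrightarrow> rk R P (fst e) < rk R P (snd e))}"
      have rkb: "card (ch v \<inter> P) < card {c \<in> ch v. c \<in> N \<and> rk R P c < rk R P v}"
        if "v \<in> N" "v \<notin> R" for v
        using rk_prop[of v R P] that RV NP by simp
      have tie': "card (ch v \<inter> N) = card (ch v \<inter> P)" if "v \<in> V" "v \<notin> N" "v \<notin> P" for v
        using tie[OF that(1,3,2)] by simp
      have disj': "N \<inter> P = {}" using disj by blast
      note G = gen[where Sown=R and Sopp=B and P=N and N=P and rkf="rk R P" and X=X,
                   OF assms(4) BP disj' rkb tie' rN X_def]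
      have "red_blockage V r par B R X"
        unfolding red_blockage_def
      proof (intro conjI ballI)
        show "X \<subseteq> tedges V r par" by (rule G(1)) show "rayless X" by (rule G(2))
        show "verts X \<inter> B = {}" using G(3) BP by blast
        fix v assume "v \<in> verts X \<union> {r} - R"
        thus "0 \<le> accum2 v X (flow V r par B X)" using G(4)[of v] by (auto split: if_splits)
      qed
      thus ?thesis by blast
    qed
  qed
qed

end
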